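(* Let $D>0$, $b>0$, $\delta\in(0,D)$, $y\in\mathbb R$, and define on $\{\mathrm{Re}\,z>0\}$ $$R(z)=\sqrt D\int_{\mathbb R}\frac{\exp\big(-\frac{|x-y|}{\sqrt D}\sqrt z\big)}{\sqrt z}\,\varphi_{b,\delta}(x)\,dx .$$ Then $R$ is the Laplace transform of a function on $(0,\infty)$, and $R(z)=O(z^{-1})$ as $z\to\infty$ in $\{\mathrm{Re}\,z>0\}$.
   Context: Principal branch of $\sqrt z$. $\varphi_{b,\delta}(x)=\frac1{\sqrt{2\pi\delta}}\big(e^{-x^2/(2\delta)}-e^{-(x-2b)^2/(2\delta)}\big)$ for $x\in\mathbb R$. (The integrand factor $e^{-a\sqrt z}/\sqrt z$ is the Laplace transform of $\chi_a(u)=\frac1{\sqrt{\pi u}}e^{-a^2/(4u)}$.) *)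

theory Defs
  imports "HOL-Analysis.Analysis" "HOL-Library.Landau_Symbols"
begin

definition phi_bd :: "real \<Rightarrow> real \<Rightarrow> real \<Rightarrow> real" where
  "phi_bd b \<delta> x = (1 / sqrt (2 * pi * \<delta>)) *
      (exp (- (x^2) / (2 * \<delta>)) - exp (- ((x - 2 * b)^2) / (2 * \<delta>)))"

definition R_fun :: "real \<Rightarrow> real \<Rightarrow> real \<Rightarrow> real \<Rightarrow> complex \<Rightarrow> complex" where
  "R_fun D b \<delta> y z = complex_of_real (sqrt D) *
      integral\<^sup>L lborel (\<lambda>x::real.
        exp (- complex_of_real (\<bar>x - y\<bar> / sqrt D) * csqrt z) / csqrt z
        * complex_of_real (phi_bd b \<delta> x))"

end

theory Submission
  imports Defs "HOL-Probability.Probability" "HOL-Real_Asymp.Real_Asymp"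
begin


lemma exp_lap_integrable:
  fixes w :: complex assumes "0 < Re w"
  shows "set_integrable lborel {0<..} (\<lambda>t::real. exp (- w * of_real t))"
proof -
  have "set_integrable lborel {0<..} (\<lambda>x::real. exp (-(x * Re w)))"
    using integrable_I0i_exp_mscale[OF assms] .
  then show ?thesis
    unfolding set_integrable_def
    apply (rule Bochner_Integration.integrable_bound)
     apply (intro borel_measurable_scaleR borel_measurable_indicator) apply simp apply measurable
    apply (auto simp: indicator_def norm_exp_eq_Re mult.commute)
    done
qed

lemma exp_lap_integral:
  fixes w :: complex assumes "0 < Re w"
  shows "(LINT t:{0<..}|lborel. exp (- w * of_real t)) = 1 / w"
proof -
  have w0: "w \<noteq> 0" using assms by auto
  have "(LBINT t=ereal 0..\<infinity>. exp (- w * of_real t)) = 0 - (- 1 / w)"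
  proof (rule interval_integral_FTC_integrable[where F="\<lambda>t. - exp (- w * of_real t) / w"])
    show "ereal 0 < \<infinity>" by simp
    fix x :: real
    show "((\<lambda>t. - exp (- w * of_real t) / w) has_vector_derivative exp (- w * of_real x)) (at x)"
    proof -
      have "((\<lambda>t. - exp (- w * t) / w) has_field_derivative exp (- w * of_real x)) (at (of_real x))"
        using w0 by (auto intro!: derivative_eq_intros simp: field_simps)
      from has_vector_derivative_real_field[OF this] show ?thesis by simp
    qed
    show "isCont (\<lambda>t. exp (- w * complex_of_real t)) x" by (intro continuous_intros)
  next
    show "set_integrable lborel (einterval (ereal 0) \<infinity>) (\<lambda>t. exp (- w * complex_of_real t))"
      using exp_lap_integrable[OF assms] by (simp add: einterval_def greaterThan_def)
  next
    show "(((\<lambda>t. - exp (- w * complex_of_real t) / w) \<circ> real_of_ereal) \<longlongrightarrow> - 1 / w) (at_right (ereal 0))"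
      unfolding ereal_tendsto_simps1
      using w0 by (auto intro!: tendsto_eq_intros)
  next
    have lim0: "((\<lambda>t. exp (- w * complex_of_real t)) \<longlongrightarrow> 0) at_top"
    proof (rule tendsto_norm_zero_cancel)
      have "((\<lambda>t. exp (- (Re w * t))) \<longlongrightarrow> 0) at_top"
        using assms by real_asymp
      then show "((\<lambda>t. norm (exp (- w * complex_of_real t))) \<longlongrightarrow> 0) at_top"
        by (simp add: norm_exp_eq_Re)
    qed
    then show "(((\<lambda>t. - exp (- w * complex_of_real t) / w) \<circ> real_of_ereal) \<longlongrightarrow> 0) (at_left \<infinity>)"
      unfolding ereal_tendsto_simps1
      using tendsto_divide[OF tendsto_minus[OF lim0] tendsto_const[of w]] w0 by simp
  qed
  then show ?thesis by (simp add: interval_integral_to_infinity_eq)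
qed


lemma split_reflect:
  fixes h :: "real \<Rightarrow> complex"
  assumes i1: "set_integrable lborel {0<..} h" and i2: "set_integrable lborel {0<..} (\<lambda>v. h (- v))"
  shows "integrable lborel h \<and> integral\<^sup>L lborel h = (LINT v:{0<..}|lborel. h v) + (LINT v:{0<..}|lborel. h (- v))"
proof -
  let ?f = "\<lambda>u. indicator {..<0} u *\<^sub>R h u"
  have e: "(\<lambda>x. ?f (0 + (-1) * x)) = (\<lambda>v. indicator {0<..} v *\<^sub>R h (- v))"
    by (auto simp: indicator_def fun_eq_iff)
  have if2: "integrable lborel ?f"
    using lborel_integrable_real_affine_iff[of "-1" ?f 0] i2 unfolding e set_integrable_def by simp
  have I2: "integral\<^sup>L lborel ?f = (LINT v:{0<..}|lborel. h (- v))"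
    using lborel_integral_real_affine[of "-1" ?f 0] unfolding e set_lebesgue_integral_def by simp
  have if1: "integrable lborel (\<lambda>u. indicator {0<..} u *\<^sub>R h u)"
    using i1 unfolding set_integrable_def .
  have ae: "AE u in lborel. indicator {0<..} u *\<^sub>R h u + ?f u = h u"
    using AE_lborel_singleton[of 0] by eventually_elim (auto simp: indicator_def)
  have int: "integrable lborel (\<lambda>u. indicator {0<..} u *\<^sub>R h u + ?f u)"
    using if1 if2 by auto
  have hdec: "h = (\<lambda>u. indicator {0<..} u *\<^sub>R h u + ?f u + indicator {0} u *\<^sub>R h 0)"
    by (auto simp: indicator_def fun_eq_iff)
  have ih: "integrable lborel h"
    by (subst hdec) (intro Bochner_Integration.integrable_add int integrable_scaleR_left integrable_real_indicator; simp)
  have mh: "h \<in> borel_measurable lborel" using ih by auto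
  have "integral\<^sup>L lborel h = integral\<^sup>L lborel (\<lambda>u. indicator {0<..} u *\<^sub>R h u + ?f u)"
    using ae mh borel_measurable_integrable[OF int] by (intro integral_cong_AE) auto
  also have "\<dots> = (LINT v:{0<..}|lborel. h v) + (LINT v:{0<..}|lborel. h (- v))"
    using if1 if2 I2 by (simp add: set_lebesgue_integral_def)
  finally show ?thesis using ih by simp
qed

lemma two_sided:
  fixes c :: complex and k y :: real
  assumes c: "0 < Re c"
  shows "integrable lborel (\<lambda>x. exp (- c * of_real \<bar>x - y\<bar>) * iexp (k * x))
     \<and> (LINT x|lborel. exp (- c * of_real \<bar>x - y\<bar>) * iexp (k * x)) = iexp (k * y) * (2 * c / (c\<^sup>2 + (of_real k)\<^sup>2))"
proof -
  define h where "h u = exp (- c * of_real \<bar>u\<bar>) * iexp (k * u)" for u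
  have hp: "set_integrable lborel {0<..} h" and hpi: "(LINT v:{0<..}|lborel. h v) = 1 / (c - \<i> * of_real k)"
  proof -
    have w: "0 < Re (c - \<i> * of_real k)" using c by simp
    have pw: "h t = exp (- (c - \<i> * of_real k) * of_real t)" if "t \<in> {0<..}" for t
      using that unfolding h_def by (simp add: exp_add[symmetric] algebra_simps)
    have eq: "set_lebesgue_integral lborel {0<..} h = set_lebesgue_integral lborel {0<..} (\<lambda>t. exp (- (c - \<i> * of_real k) * of_real t))"
      and eq2: "set_integrable lborel {0<..} h = set_integrable lborel {0<..} (\<lambda>t. exp (- (c - \<i> * of_real k) * of_real t))"
      subgoal using pw by (intro set_lebesgue_integral_cong) auto
      subgoal using pw by (intro set_integrable_cong) auto
      done
    show "set_integrable lborel {0<..} h" using eq2 exp_lap_integrable[OF w] by simp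
    show "(LINT v:{0<..}|lborel. h v) = 1 / (c - \<i> * of_real k)" using eq exp_lap_integral[OF w] by simp
  qed
  have hm: "set_integrable lborel {0<..} (\<lambda>v. h (- v))" and hmi: "(LINT v:{0<..}|lborel. h (- v)) = 1 / (c + \<i> * of_real k)"
  proof -
    have w: "0 < Re (c + \<i> * of_real k)" using c by simp
    have pw: "h (- t) = exp (- (c + \<i> * of_real k) * of_real t)" if "t \<in> {0<..}" for t
      using that unfolding h_def by (simp add: exp_add[symmetric] algebra_simps)
    have eq: "set_lebesgue_integral lborel {0<..} (\<lambda>v. h (- v)) = set_lebesgue_integral lborel {0<..} (\<lambda>t. exp (- (c + \<i> * of_real k) * of_real t))"
      and eq2: "set_integrable lborel {0<..} (\<lambda>v. h (- v)) = set_integrable lborel {0<..} (\<lambda>t. exp (- (c + \<i> * of_real k) * of_real t))"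
      subgoal using pw by (intro set_lebesgue_integral_cong) auto
      subgoal using pw by (intro set_integrable_cong) auto
      done
    show "set_integrable lborel {0<..} (\<lambda>v. h (- v))" using eq2 exp_lap_integrable[OF w] by simp
    show "(LINT v:{0<..}|lborel. h (- v)) = 1 / (c + \<i> * of_real k)" using eq exp_lap_integral[OF w] by simp
  qed
  note H = split_reflect[OF hp hm]
  have ne1: "c - \<i> * of_real k \<noteq> 0" and ne2: "c + \<i> * of_real k \<noteq> 0"
    using c by (auto simp: complex_eq_iff)
  have prod: "c\<^sup>2 + (of_real k)\<^sup>2 = (c - \<i> * of_real k) * (c + \<i> * of_real k)"
    by (simp add: power2_eq_square algebra_simps)
  have sumv: "1 / (c - \<i> * of_real k) + 1 / (c + \<i> * of_real k) = 2 * c / (c\<^sup>2 + (of_real k)\<^sup>2)"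
    unfolding prod using ne1 ne2 by (simp add: field_simps)
  define G where "G x = exp (- c * of_real \<bar>x - y\<bar>) * iexp (k * x)" for x
  have GH: "G (y + 1 * u) = iexp (k * y) * h u" for u
    by (simp add: G_def h_def exp_add[symmetric] algebra_simps)
  have "integrable lborel (\<lambda>u. G (y + 1 * u))" unfolding GH using H by simp
  then have iG: "integrable lborel G" using lborel_integrable_real_affine_iff[of 1 G y] by simp
  have "integral\<^sup>L lborel G = integral\<^sup>L lborel (\<lambda>u. G (y + 1 * u))"
    using lborel_integral_real_affine[of 1 G y] by simp
  also have "\<dots> = iexp (k * y) * integral\<^sup>L lborel h" unfolding GH by simp
  finally show ?thesis using iG H hpi hmi sumv unfolding G_def by simp
qed


lemma n_int: "integrable lborel std_normal_density"
  using integrable_std_normal_moment[of 0] by simp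

lemma gauss_char:
  "complex_of_real (exp (- (t^2) / 2)) = (LINT s|lborel. complex_of_real (std_normal_density s) * iexp (t * s))"
proof -
  have "complex_of_real (exp (- (t^2) / 2)) = char std_normal_distribution t"
    by (simp add: char_std_normal_distribution)
  also have "\<dots> = (LINT s|lborel. std_normal_density s *\<^sub>R iexp (t * s))"
    unfolding char_def
    by (rule integral_density) (auto simp: normal_density_nonneg)
  finally show ?thesis by (simp add: scaleR_conv_of_real)
qed

definition kap :: "real \<Rightarrow> real" where "kap \<delta> = 1 / sqrt \<delta>"

definition Gf :: "real \<Rightarrow> real \<Rightarrow> real \<Rightarrow> complex" where
  "Gf b \<delta> s = complex_of_real (1 / sqrt (2 * pi * \<delta>) * std_normal_density s) * (1 - iexp (- (2 * b * kap \<delta>) * s))"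

lemma Gf_meas[measurable]: "Gf b \<delta> \<in> borel_measurable borel"
  unfolding Gf_def by measurable

lemma Gf_norm: "norm (Gf b \<delta> s) \<le> 2 * \<bar>1 / sqrt (2 * pi * \<delta>)\<bar> * std_normal_density s"
proof -
  have a: "norm (1 - iexp r) \<le> 2" for r
    using norm_triangle_ineq4[of 1 "iexp r"] by (simp add: norm_exp_i_times)
  have "norm (Gf b \<delta> s) = \<bar>1 / sqrt (2 * pi * \<delta>) * std_normal_density s\<bar> * norm (1 - iexp (- (2 * b * kap \<delta>) * s))"
    by (simp only: Gf_def norm_mult norm_of_real)
  also have "\<dots> \<le> \<bar>1 / sqrt (2 * pi * \<delta>) * std_normal_density s\<bar> * 2"
    by (intro mult_left_mono a) auto
  also have "\<dots> = 2 * \<bar>1 / sqrt (2 * pi * \<delta>)\<bar> * std_normal_density s"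
    by (simp add: abs_mult normal_density_nonneg)
  finally show ?thesis .
qed

lemma Gf_int: "integrable lborel (Gf b \<delta>)"
  by (rule Bochner_Integration.integrable_bound[OF integrable_mult_right[OF n_int, of "2 * \<bar>1 / sqrt (2 * pi * \<delta>)\<bar>"]])
     (auto intro!: AE_I2 order_trans[OF Gf_norm] simp: abs_mult normal_density_nonneg)

lemma Gf_iexp_int: "integrable lborel (\<lambda>s. Gf b \<delta> s * iexp (a * s))"
  by (rule Bochner_Integration.integrable_bound[OF Gf_int]) (auto simp: norm_mult norm_exp_i_times)

lemma phi_repr:
  assumes "0 < \<delta>"
  shows "complex_of_real (phi_bd b \<delta> x) = (LINT s|lborel. Gf b \<delta> s * iexp (kap \<delta> * s * x))"
proof -
  have k2: "(kap \<delta>)\<^sup>2 = 1 / \<delta>" using assms by (simp add: kap_def power_divide)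
  have e1: "exp (- (x^2) / (2 * \<delta>)) = exp (- ((kap \<delta> * x)^2) / 2)"
    by (simp add: power_mult_distrib k2)
  have e2: "exp (- ((x - 2 * b)^2) / (2 * \<delta>)) = exp (- ((kap \<delta> * (x - 2 * b))^2) / 2)"
    by (simp add: power_mult_distrib k2)
  have ni: "integrable lborel (\<lambda>s. complex_of_real (std_normal_density s) * iexp (t * s))" for t
    by (rule Bochner_Integration.integrable_bound[OF n_int]) (auto simp: norm_mult norm_exp_i_times normal_density_nonneg)
  have "complex_of_real (phi_bd b \<delta> x) = complex_of_real (1 / sqrt (2 * pi * \<delta>)) *
     (complex_of_real (exp (- ((kap \<delta> * x)^2) / 2)) - complex_of_real (exp (- ((kap \<delta> * (x - 2 * b))^2) / 2)))"
    unfolding phi_bd_def e1 e2 by simp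
  also have "\<dots> = complex_of_real (1 / sqrt (2 * pi * \<delta>)) *
     ((LINT s|lborel. complex_of_real (std_normal_density s) * iexp (kap \<delta> * x * s)) - (LINT s|lborel. complex_of_real (std_normal_density s) * iexp (kap \<delta> * (x - 2 * b) * s)))"
    unfolding gauss_char ..
  also have "\<dots> = (LINT s|lborel. complex_of_real (1 / sqrt (2 * pi * \<delta>)) * (complex_of_real (std_normal_density s) * iexp (kap \<delta> * x * s) - complex_of_real (std_normal_density s) * iexp (kap \<delta> * (x - 2 * b) * s)))"
    by (simp only: Bochner_Integration.integral_diff[OF ni[of "kap \<delta> * x"] ni[of "kap \<delta> * (x - 2 * b)"], symmetric] integral_mult_right_zero)
  also have "\<dots> = (LINT s|lborel. Gf b \<delta> s * iexp (kap \<delta> * s * x))"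
    unfolding Gf_def
    by (rule Bochner_Integration.integral_cong) (auto simp: algebra_simps exp_add[symmetric] exp_diff[symmetric])
  finally show ?thesis .
qed


lemma LLpsf: "pair_sigma_finite lborel lborel"
  by (simp add: lborel.sigma_finite_measure_axioms pair_sigma_finite_def)

lemma prod_int:
  fixes f :: "real \<times> real \<Rightarrow> complex" and a b :: "real \<Rightarrow> real"
  assumes fm: "f \<in> borel_measurable (lborel \<Otimes>\<^sub>M lborel)"
    and ai: "integrable lborel a" and bi: "integrable lborel b"
    and a0: "\<And>x. 0 \<le> a x" and b0: "\<And>x. 0 \<le> b x"
    and bd: "\<And>x s. norm (f (x, s)) \<le> a x * b s"
  shows "integrable (lborel \<Otimes>\<^sub>M lborel) f"
proof -
  have am[measurable]: "a \<in> borel_measurable borel" and bm[measurable]: "b \<in> borel_measurable borel"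
    using ai bi by auto
  have "integrable (lborel \<Otimes>\<^sub>M lborel) (\<lambda>p. a (fst p) * b (snd p))"
  proof (rule pair_sigma_finite.Fubini_integrable[OF LLpsf])
    show "(\<lambda>p. a (fst p) * b (snd p)) \<in> borel_measurable (lborel \<Otimes>\<^sub>M lborel)" by measurable
    have "(\<lambda>x. LINT y|lborel. norm (a (fst (x, y)) * b (snd (x, y)))) = (\<lambda>x. a x * integral\<^sup>L lborel b)"
      using a0 b0 by (simp add: abs_mult)
    then show "integrable lborel (\<lambda>x. LINT y|lborel. norm (a (fst (x, y)) * b (snd (x, y))))"
      using ai by simp
    show "AE x in lborel. integrable lborel (\<lambda>y. a (fst (x, y)) * b (snd (x, y)))"
      using bi by simp
  qed
  then show ?thesis
    by (rule Bochner_Integration.integrable_bound) (use fm bd a0 b0 in auto)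
qed


lemma Re_csqrt_pos: assumes "0 < Re z" shows "0 < Re (csqrt z)"
proof (rule ccontr)
  assume "\<not> 0 < Re (csqrt z)"
  then have r0: "Re (csqrt z) = 0" using csqrt_principal[of z] by auto
  have "Re z = Re ((csqrt z)^2)" by simp
  also have "\<dots> = (Re (csqrt z))^2 - (Im (csqrt z))^2" by (simp add: power2_eq_square)
  also have "\<dots> \<le> 0" using r0 by simp
  finally show False using assms by simp
qed

lemma R_step1:
  assumes D: "0 < D" and dl: "0 < \<delta>" and z: "0 < Re z"
  shows "R_fun D b \<delta> y z = (LINT s|lborel. Gf b \<delta> s * iexp (kap \<delta> * s * y) * (2 * of_real D / (z + of_real D * (of_real (kap \<delta> * s))\<^sup>2)))"
proof -
  define c where "c = csqrt z / of_real (sqrt D)"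
  have sz: "csqrt z \<noteq> 0" using z by auto
  have cp: "0 < Re c" using Re_csqrt_pos[OF z] D by (simp add: c_def)
  define F where "F x s = (1 / csqrt z) * exp (- c * of_real \<bar>x - y\<bar>) * (Gf b \<delta> s * iexp (kap \<delta> * s * x))" for x s
  have Fm: "(\<lambda>p. F (fst p) (snd p)) \<in> borel_measurable (lborel \<Otimes>\<^sub>M lborel)"
    unfolding F_def by measurable
  have ai: "integrable lborel (\<lambda>x. norm (1 / csqrt z) * exp (- Re c * \<bar>x - y\<bar>))"
  proof -
    have "integrable lborel (\<lambda>x. exp (- complex_of_real (Re c) * of_real \<bar>x - y\<bar>) * iexp (0 * x))"
      using two_sided[of "complex_of_real (Re c)" y 0] cp by simp
    then have "integrable lborel (\<lambda>x. norm (exp (- complex_of_real (Re c) * of_real \<bar>x - y\<bar>) * iexp (0 * x)))"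
      by (rule integrable_norm)
    then have "integrable lborel (\<lambda>x. exp (- Re c * \<bar>x - y\<bar>))"
      by (simp add: norm_exp_eq_Re)
    then show ?thesis by simp
  qed
  have Fi: "integrable (lborel \<Otimes>\<^sub>M lborel) (\<lambda>p. F (fst p) (snd p))"
  proof (rule prod_int[OF Fm ai integrable_norm[OF Gf_int]])
    fix x s
    show "norm (F (fst (x, s)) (snd (x, s))) \<le> norm (1 / csqrt z) * exp (- Re c * \<bar>x - y\<bar>) * norm (Gf b \<delta> s)"
      unfolding F_def fst_conv snd_conv norm_mult norm_exp_eq_Re by simp
  qed auto
  have Fi': "integrable (lborel \<Otimes>\<^sub>M lborel) (case_prod F)"
    using Fi by (simp add: case_prod_beta')
  have inner: "(LINT x|lborel. F x s) = (1 / csqrt z) * Gf b \<delta> s * (iexp (kap \<delta> * s * y) * (2 * c / (c\<^sup>2 + (of_real (kap \<delta> * s))\<^sup>2)))" for s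
  proof -
    have "(LINT x|lborel. F x s) = (1 / csqrt z) * Gf b \<delta> s * (LINT x|lborel. exp (- c * of_real \<bar>x - y\<bar>) * iexp ((kap \<delta> * s) * x))"
      unfolding F_def by (simp add: ac_simps)
    then show ?thesis using two_sided[OF cp, of y "kap \<delta> * s"] by simp
  qed
  have "R_fun D b \<delta> y z = of_real (sqrt D) * (LINT x|lborel. (LINT s|lborel. F x s))"
    unfolding R_fun_def
  proof (intro arg_cong[where f="\<lambda>u. of_real (sqrt D) * u"] Bochner_Integration.integral_cong refl)
    fix x
    have e: "exp (- complex_of_real (\<bar>x - y\<bar> / sqrt D) * csqrt z) = exp (- c * of_real \<bar>x - y\<bar>)"
      by (simp add: c_def ac_simps)
    show "exp (- complex_of_real (\<bar>x - y\<bar> / sqrt D) * csqrt z) / csqrt z * complex_of_real (phi_bd b \<delta> x) = (LINT s|lborel. F x s)"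
      unfolding e phi_repr[OF dl] F_def integral_mult_right_zero by (simp add: field_simps)
  qed
  also have "\<dots> = of_real (sqrt D) * (LINT s|lborel. (LINT x|lborel. F x s))"
    using pair_sigma_finite.Fubini_integral[OF LLpsf Fi'] by simp
  also have "\<dots> = of_real (sqrt D) * (LINT s|lborel. (1 / csqrt z) * Gf b \<delta> s * (iexp (kap \<delta> * s * y) * (2 * c / (c\<^sup>2 + (of_real (kap \<delta> * s))\<^sup>2))))"
    unfolding inner ..
  also have "\<dots> = (LINT s|lborel. Gf b \<delta> s * iexp (kap \<delta> * s * y) * (2 * of_real D / (z + of_real D * (of_real (kap \<delta> * s))\<^sup>2)))"
  proof -
    have key: "of_real (sqrt D) * ((1 / csqrt z) * (2 * c / (c\<^sup>2 + k\<^sup>2))) = 2 * of_real D / (z + of_real D * k\<^sup>2)" 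
      if "0 < Re (z + of_real D * k\<^sup>2)" for k :: complex
    proof -
      have sD: "complex_of_real (sqrt D) \<noteq> 0" using D by simp
      have c2: "c\<^sup>2 = z / of_real D" using D by (simp add: c_def power_divide flip: of_real_power)
      have nz: "z + of_real D * k\<^sup>2 \<noteq> 0" using that by (metis less_irrefl zero_complex.sel(1))
      have nz2: "z / of_real D + k\<^sup>2 \<noteq> 0"
      proof
        assume "z / of_real D + k\<^sup>2 = 0"
        then have "of_real D * (z / of_real D + k\<^sup>2) = 0" by simp
        then show False using nz D by (simp add: algebra_simps)
      qed
      have DD: "complex_of_real D = of_real (sqrt D) * of_real (sqrt D)"
        using D by (simp flip: of_real_mult)
      show ?thesis unfolding c2 using sz sD nz nz2 D
        by (simp add: c_def field_simps DD)
    qed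
    have pos: "Re (z + of_real D * (complex_of_real (kap \<delta> * s))\<^sup>2) > 0" for s
      using z D by (simp add: power2_eq_square flip: of_real_mult of_real_power) (simp add: add_pos_nonneg)
    have pw: "of_real (sqrt D) * ((1 / csqrt z) * Gf b \<delta> s * (iexp (kap \<delta> * s * y) * (2 * c / (c\<^sup>2 + (of_real (kap \<delta> * s))\<^sup>2))))
        = Gf b \<delta> s * iexp (kap \<delta> * s * y) * (2 * of_real D / (z + of_real D * (of_real (kap \<delta> * s))\<^sup>2))" for s
    proof -
      have "of_real (sqrt D) * ((1 / csqrt z) * Gf b \<delta> s * (iexp (kap \<delta> * s * y) * (2 * c / (c\<^sup>2 + (of_real (kap \<delta> * s))\<^sup>2))))
        = Gf b \<delta> s * iexp (kap \<delta> * s * y) * (of_real (sqrt D) * ((1 / csqrt z) * (2 * c / (c\<^sup>2 + (of_real (kap \<delta> * s))\<^sup>2))))"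
        by (simp only: ac_simps)
      then show ?thesis by (simp only: key[OF pos[of s]])
    qed
    show ?thesis
      by (subst integral_mult_right_zero[symmetric]) (simp only: pw)
  qed
  finally show ?thesis .
qed


definition fL :: "real \<Rightarrow> real \<Rightarrow> real \<Rightarrow> real \<Rightarrow> real \<Rightarrow> complex" where
  "fL D b \<delta> y t = (LINT s|lborel. Gf b \<delta> s * iexp (kap \<delta> * s * y) * (2 * of_real D) * exp (- of_real (D * (kap \<delta> * s)\<^sup>2) * of_real t))"

lemma laplace_part:
  assumes D: "0 < D" and dl: "0 < \<delta>" and z: "0 < Re z"
  shows "set_integrable lborel {0<..} (\<lambda>t. exp (- z * complex_of_real t) * fL D b \<delta> y t)
     \<and> R_fun D b \<delta> y z = (LINT t:{0<..}|lborel. exp (- z * complex_of_real t) * fL D b \<delta> y t)"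
proof -
  define Q where "Q s t = indicator {0<..} t *\<^sub>R (Gf b \<delta> s * iexp (kap \<delta> * s * y) * (2 * of_real D) * exp (- (z + of_real (D * (kap \<delta> * s)\<^sup>2)) * of_real t))" for s t
  have Qm: "(\<lambda>p. Q (fst p) (snd p)) \<in> borel_measurable (lborel \<Otimes>\<^sub>M lborel)"
    unfolding Q_def by measurable
  have bi: "integrable lborel (\<lambda>t. indicator {0<..} t * exp (- (t * Re z)))"
    using integrable_I0i_exp_mscale[OF z] by (simp add: set_integrable_def)
  have ai: "integrable lborel (\<lambda>s. 2 * D * norm (Gf b \<delta> s))"
    using integrable_norm[OF Gf_int] by simp
  have Qi: "integrable (lborel \<Otimes>\<^sub>M lborel) (\<lambda>p. Q (fst p) (snd p))"
  proof (rule prod_int[OF Qm ai bi])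
    fix s t
    have "norm (exp (- (z + of_real (D * (kap \<delta> * s)\<^sup>2)) * of_real t)) \<le> exp (- (t * Re z))" if "0 < t"
    proof -
      have "norm (exp (- (z + of_real (D * (kap \<delta> * s)\<^sup>2)) * of_real t)) = exp (- (Re z + D * (kap \<delta> * s)\<^sup>2) * t)"
        by (simp add: norm_exp_eq_Re)
      also have "\<dots> \<le> exp (- (t * Re z))"
        using that D by (simp add: algebra_simps mult_nonneg_nonneg)
      finally show ?thesis .
    qed
    then show "norm (Q (fst (s, t)) (snd (s, t))) \<le> 2 * D * norm (Gf b \<delta> s) * (indicator {0<..} t * exp (- (t * Re z)))"
      using D unfolding Q_def fst_conv snd_conv
      by (auto simp: indicator_def norm_mult mult_left_mono)
  qed (use D in auto)
  have Qi': "integrable (lborel \<Otimes>\<^sub>M lborel) (case_prod Q)"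
    using Qi by (simp add: case_prod_beta')
  have inner_t: "(LINT t|lborel. Q s t) = Gf b \<delta> s * iexp (kap \<delta> * s * y) * (2 * of_real D / (z + of_real D * (of_real (kap \<delta> * s))\<^sup>2))" for s
  proof -
    define w where "w = z + of_real (D * (kap \<delta> * s)\<^sup>2)"
    have wp: "0 < Re w" using z D by (simp add: w_def add_pos_nonneg)
    have "(LINT t|lborel. Q s t) = Gf b \<delta> s * iexp (kap \<delta> * s * y) * (2 * of_real D) * (LINT t:{0<..}|lborel. exp (- w * of_real t))"
    proof -
      have "Q s t = Gf b \<delta> s * iexp (kap \<delta> * s * y) * (2 * of_real D) * (indicator {0<..} t *\<^sub>R exp (- w * of_real t))" for t
        unfolding Q_def w_def by (simp add: scaleR_conv_of_real ac_simps)
      then show ?thesis unfolding set_lebesgue_integral_def integral_mult_right_zero[symmetric] by presburger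
    qed
    also have "\<dots> = Gf b \<delta> s * iexp (kap \<delta> * s * y) * (2 * of_real D / w)"
      unfolding exp_lap_integral[OF wp] by simp
    finally show ?thesis by (simp add: w_def)
  qed
  have inner_s: "(LINT s|lborel. Q s t) = indicator {0<..} t *\<^sub>R (exp (- z * complex_of_real t) * fL D b \<delta> y t)" for t
  proof -
    have "Q s t = (indicator {0<..} t *\<^sub>R exp (- z * complex_of_real t)) * (Gf b \<delta> s * iexp (kap \<delta> * s * y) * (2 * of_real D) * exp (- of_real (D * (kap \<delta> * s)\<^sup>2) * of_real t))" for s
      unfolding Q_def by (simp add: scaleR_conv_of_real exp_add[symmetric] algebra_simps)
    then have "(LINT s|lborel. Q s t) = (indicator {0<..} t *\<^sub>R exp (- z * complex_of_real t)) * fL D b \<delta> y t"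
      unfolding fL_def by (simp only: integral_mult_right_zero)
    then show ?thesis by simp
  qed
  have "integrable lborel (\<lambda>t. LINT s|lborel. Q s t)"
    using pair_sigma_finite.integrable_snd[OF LLpsf Qi'] .
  then have I: "set_integrable lborel {0<..} (\<lambda>t. exp (- z * complex_of_real t) * fL D b \<delta> y t)"
    unfolding set_integrable_def inner_s .
  have "R_fun D b \<delta> y z = (LINT s|lborel. LINT t|lborel. Q s t)"
    unfolding R_step1[OF D dl z] inner_t ..
  also have "\<dots> = (LINT t|lborel. LINT s|lborel. Q s t)"
    using pair_sigma_finite.Fubini_integral[OF LLpsf Qi'] by simp
  also have "\<dots> = (LINT t:{0<..}|lborel. exp (- z * complex_of_real t) * fL D b \<delta> y t)"
    unfolding inner_s set_lebesgue_integral_def ..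
  finally show ?thesis using I by simp
qed



lemma norm_le_add_pos:
  fixes z :: complex and r :: real
  assumes "0 \<le> Re z" "0 \<le> r"
  shows "norm z \<le> norm (z + of_real r)"
proof -
  have "(Re z)\<^sup>2 \<le> (Re z + r)\<^sup>2" using assms by (intro power_mono) auto
  then show ?thesis unfolding cmod_def by (intro real_sqrt_le_mono) simp
qed

lemma R_bound:
  assumes D: "0 < D" and dl: "0 < \<delta>" and z: "0 < Re z"
  shows "norm (R_fun D b \<delta> y z) \<le> (2 * D * (LINT s|lborel. norm (Gf b \<delta> s))) * norm (inverse z)"
proof -
  have z0: "z \<noteq> 0" using z by auto
  let ?g = "\<lambda>s. Gf b \<delta> s * iexp (kap \<delta> * s * y) * (2 * of_real D / (z + of_real D * (of_real (kap \<delta> * s))\<^sup>2))"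
  have pw: "norm (?g s) \<le> norm (Gf b \<delta> s) * (2 * D / norm z)" for s
  proof -
    have r: "z + of_real D * (of_real (kap \<delta> * s))\<^sup>2 = z + of_real (D * (kap \<delta> * s)\<^sup>2)" by simp
    have le: "norm z \<le> norm (z + of_real D * (of_real (kap \<delta> * s))\<^sup>2)"
      unfolding r using z D by (intro norm_le_add_pos) auto
    have "norm (?g s) = norm (Gf b \<delta> s) * (2 * D / norm (z + of_real D * (of_real (kap \<delta> * s))\<^sup>2))"
      using D by (simp add: norm_mult norm_divide)
    also have "\<dots> \<le> norm (Gf b \<delta> s) * (2 * D / norm z)"
    proof -
      have "0 < norm z" using z0 by simp
      then have "0 < norm (z + of_real D * (of_real (kap \<delta> * s))\<^sup>2)" using le by linarith
      then show ?thesis using le z0 D \<open>0 < norm z\<close>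
        by (intro mult_left_mono divide_left_mono) (auto intro: mult_pos_pos)
    qed
    finally show ?thesis .
  qed
  have "norm (R_fun D b \<delta> y z) = norm (LINT s|lborel. ?g s)" unfolding R_step1[OF D dl z] ..
  also have "\<dots> \<le> (LINT s|lborel. norm (Gf b \<delta> s) * (2 * D / norm z))"
  proof (rule Bochner_Integration.integral_norm_bound_integral[where M=lborel and f="?g" and g="\<lambda>s. norm (Gf b \<delta> s) * (2 * D / norm z)"])
    show gi: "integrable lborel (\<lambda>s. norm (Gf b \<delta> s) * (2 * D / norm z))"
      by (intro integrable_mult_left integrable_norm Gf_int)
    show "integrable lborel ?g"
      by (rule Bochner_Integration.integrable_bound[OF gi]) (measurable, intro AE_I2 order_trans[OF pw], use D in simp)
  qed (use pw in auto)
  also have "\<dots> = (2 * D * (LINT s|lborel. norm (Gf b \<delta> s))) * norm (inverse z)"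
    by (simp add: norm_inverse norm_divide field_simps)
  finally show ?thesis .
qed

theorem lemma8p5:
  fixes D b \<delta> y :: real
  assumes "D > 0" and "b > 0" and "0 < \<delta>" and "\<delta> < D"
  shows "(\<exists>f :: real \<Rightarrow> complex. \<forall>z. 0 < Re z \<longrightarrow>
            set_integrable lborel {0<..} (\<lambda>t. exp (- z * complex_of_real t) * f t)
            \<and> R_fun D b \<delta> y z = (LINT t:{0<..}|lborel. exp (- z * complex_of_real t) * f t))
         \<and> R_fun D b \<delta> y \<in> O[inf at_infinity (principal {z. 0 < Re z})](\<lambda>z. inverse z)"
proof
  show "\<exists>f :: real \<Rightarrow> complex. \<forall>z. 0 < Re z \<longrightarrow>
            set_integrable lborel {0<..} (\<lambda>t. exp (- z * complex_of_real t) * f t)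
            \<and> R_fun D b \<delta> y z = (LINT t:{0<..}|lborel. exp (- z * complex_of_real t) * f t)"
    using laplace_part[OF assms(1) assms(3)] by blast
  have ev: "eventually (\<lambda>z. 0 < Re z) (inf at_infinity (principal {z. 0 < Re z}))"
    by (simp add: eventually_inf_principal)
  show "R_fun D b \<delta> y \<in> O[inf at_infinity (principal {z. 0 < Re z})](\<lambda>z. inverse z)"
    by (rule bigoI[where c = "2 * D * (LINT s|lborel. norm (Gf b \<delta> s))"])
       (use ev R_bound[OF assms(1) assms(3)] in \<open>auto elim: eventually_mono\<close>)
qed

end
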